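(* Fix an alphabet $\Sigma=\{a_1,\dots,a_\sigma\}$ with $\sigma\ge 1$. Then: (i) every word of length $n$ over $\Sigma$ has at most $n^2$ distinct Abelian periods; (ii) for every $n\ge 1$ divisible by $\sigma$, the word $w=(a_1a_2\cdots a_\sigma)^{n/\sigma}$ has Abelian period $(h,p)$ for every integer $p$ with $1\le p\le n$ and $p\equiv 0 \pmod{\sigma}$ and every integer $h$ with $0\le h\le \min(p-1,\,n-p)$. Consequently there is a constant $c>0$ depending only on $\sigma$ such that, for every $n$ divisible by $\sigma$, this word has at least $c\,n^2$ distinct Abelian periods. Hence the maximum number of Abelian periods of a word of length $n$ over $\Sigma$ is $\Theta(n^2)$.
   Context: Words are finite sequences over a finite alphabet $\Sigma=\{a_1,\dots,a_\sigma\}$; positions are numbered from $1$, $w[i]$ is the $i$-th letter and $|w|$ the length. For a word $u$, its Parikh vector is $\mathcal{P}_u=(|u|_{a_1},\dots,|u|_{a_\sigma})$, where $|u|_a$ is the number of occurrences of the letter $a$ in $u$; its norm is $|\mathcal{P}_u|=\sum_i \mathcal{P}_u[i]=|u|$. For Parikh vectors $\mathcal{P},\mathcal{Q}$ write $\mathcal{P}\subset\mathcal{Q}$ if $\mathcal{P}[i]\le\mathcal{Q}[i]$ for all $1\le i\le\sigma$ and $|\mathcal{P}|<|\mathcal{Q}|$ (and $\mathcal{Q}\supset\mathcal{P}$ means the same). A word $w$ has Abelian period $(h,p)$ (integers $h\ge0$, $p\ge1$) if $w=u_0u_1\cdots u_{k-1}u_k$ for some $k\ge 2$ and words $u_0,\dots,u_k$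 (where $u_0$ and $u_k$ may be empty) with $|u_0|=h$, $|u_1|=p$ and $\mathcal{P}_{u_0}\subset\mathcal{P}_{u_1}=\mathcal{P}_{u_2}=\cdots=\mathcal{P}_{u_{k-1}}\supset\mathcal{P}_{u_k}$. Two Abelian periods are distinct if they are distinct pairs $(h,p)$. *)

theory Defs
  imports Complex_Main
begin

definition parikh :: "'a list \<Rightarrow> 'a \<Rightarrow> nat" where
  "parikh u = (\<lambda>a. count_list u a)"

definition parikh_sub :: "'a list \<Rightarrow> 'a list \<Rightarrow> bool" where
  "parikh_sub u v \<longleftrightarrow> (\<forall>a. parikh u a \<le> parikh v a) \<and> length u < length v"

definition abelian_period :: "'a list \<Rightarrow> nat \<Rightarrow> nat \<Rightarrow> bool" where
  "abelian_period w h p \<longleftrightarrow> p \<ge> 1 \<and>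
     (\<exists>us k. length us = Suc k \<and> k \<ge> 2 \<and> concat us = w \<and>
        length (us ! 0) = h \<and> length (us ! 1) = p \<and>
        parikh_sub (us ! 0) (us ! 1) \<and>
        (\<forall>i\<in>{1..k-1}. parikh (us ! i) = parikh (us ! 1)) \<and>
        parikh_sub (us ! k) (us ! 1))"

definition abelian_periods :: "'a list \<Rightarrow> (nat \<times> nat) set" where
  "abelian_periods w = {(h, p). abelian_period w h p}"

end

theory Submission
  imports Defs
begin

lemma nth_concat_rep: "t < j * length xs \<Longrightarrow> concat (replicate j xs) ! t = xs ! (t mod length xs)"
proof (induction j arbitrary: t)
  case 0 then show ?case by simp
next
  case (Suc j)
  show ?case
  proof (cases "t < length xs")
    case True then show ?thesis by (simp add: nth_append)
  next
    case False
    then have "t - length xs < j * length xs" using Suc.prems by simp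
    with Suc.IH False show ?thesis by (simp add: nth_append le_mod_geq)
  qed
qed

lemma count_rep: "count_list (concat (replicate j xs)) a = j * count_list xs a"
  by (induction j) auto

lemma count_rot: "count_list (rotate s xs) a = count_list xs a"
  by (metis add.commute append_take_drop_id count_list_append rotate_drop_take)

lemma window:
  assumes "as \<noteq> []" "i + j * length as \<le> N * length as"
  shows "take (j * length as) (drop i (concat (replicate N as))) = concat (replicate j (rotate (i mod length as) as))"
proof (rule nth_equalityI)
  show "length (take (j * length as) (drop i (concat (replicate N as)))) = length (concat (replicate j (rotate (i mod length as) as)))"
    using assms by (simp add: length_concat sum_list_replicate)
next
  fix t assume "t < length (take (j * length as) (drop i (concat (replicate N as))))"
  then have t: "t < j * length as" "i + t < N * length as" using assms by (auto simp: length_concat sum_list_replicate)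
  have "take (j * length as) (drop i (concat (replicate N as))) ! t = as ! ((i+t) mod length as)"
    using t by (simp add: nth_concat_rep nth_drop length_concat sum_list_replicate)
  moreover have "concat (replicate j (rotate (i mod length as) as)) ! t = as ! ((i+t) mod length as)"
    using t assms by (simp add: nth_concat_rep nth_rotate mod_add_eq add.commute)
  ultimately show "take (j * length as) (drop i (concat (replicate N as))) ! t = concat (replicate j (rotate (i mod length as) as)) ! t" by simp
qed

lemma concat_blocks:
  "m * p \<le> length x \<Longrightarrow> concat (map (\<lambda>t. take p (drop (t*p) x)) [0..<m]) @ drop (m*p) x = x"
proof (induction m)
  case 0 then show ?case by simp
next
  case (Suc m)
  have "take p (drop (m*p) x) @ drop (Suc m * p) x = drop (m*p) x"
    by (metis add.commute append_take_drop_id drop_drop mult_Suc)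
  moreover have "m * p \<le> length x" using Suc.prems by simp
  ultimately show ?case using Suc.IH by simp
qed

lemma count_drop_le: "count_list (drop d x) a \<le> count_list x a"
  by (metis append_take_drop_id count_list_append le_add2)
lemma count_take_le: "count_list (take d x) a \<le> count_list x a"
  by (metis append_take_drop_id count_list_append le_add1)

lemma part2:
  assumes ne: "as \<noteq> []" and p1: "1 \<le> p" and pn: "p \<le> n" and dn: "length as dvd n"
    and dp: "length as dvd p" and hh: "h \<le> min (p - 1) (n - p)"
  shows "abelian_period (concat (replicate (n div length as) as)) h p"
proof -
  define s where "s = length as"
  define N where "N = n div s"
  define j where "j = p div s"
  define w where "w = concat (replicate N as)"
  have nN: "n = N * s" using dn by (simp add: N_def s_def)
  have pj: "p = j * s" using dp by (simp add: j_def s_def)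
  have lw: "length w = n" using nN by (simp add: w_def length_concat sum_list_replicate s_def)
  have hp: "h < p" "h + p \<le> n" using hh p1 pn by auto
  have win: "parikh (take p (drop i w)) = (\<lambda>a. j * count_list as a)" if "i + p \<le> n" for i
  proof -
    have "take p (drop i w) = concat (replicate j (rotate (i mod length as) as))"
      using window[OF ne, of i j N] that nN pj by (simp add: w_def s_def)
    then show ?thesis by (simp add: parikh_def count_rep count_rot)
  qed
  define m where "m = (n - h) div p"
  have m1: "m \<ge> 1"
  proof -
    have "p div p \<le> (n - h) div p" using hp by (intro div_le_mono) simp
    then show ?thesis using p1 by (simp add: m_def)
  qed
  have mp: "m * p \<le> n - h" by (simp add: m_def)
  have rp: "n - h - m * p < p"
  proof -
    have "n - h - m * p = (n - h) mod p" by (simp add: m_def minus_div_mult_eq_mod)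
    then show ?thesis using p1 by simp
  qed
  define x where "x = drop h w"
  have lx: "length x = n - h" using lw by (simp add: x_def)
  define blk where "blk = (\<lambda>t. take p (drop (t*p) x))"
  define us where "us = take h w # map blk [0..<m] @ [drop (m*p) x]"
  have cu: "concat us = w"
  proof -
    have "concat (map blk [0..<m]) @ drop (m*p) x = x"
      unfolding blk_def using concat_blocks[of m p x] mp lx by simp
    then show ?thesis by (simp add: us_def x_def)
  qed
  have lu: "length us = Suc (Suc m)" by (simp add: us_def)
  have u0: "us ! 0 = take h w" by (simp add: us_def)
  have ui: "us ! i = blk (i - 1)" if "1 \<le> i" "i \<le> m" for i
    using that by (cases i) (auto simp: us_def nth_append)
  have uk: "us ! Suc m = drop (m*p) x" by (simp add: us_def nth_append)
  have pbi: "parikh (blk t) = (\<lambda>a. j * count_list as a)" if "t < m" for t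
  proof -
    have "Suc t * p \<le> m * p" using that by (intro mult_le_mono1) simp
    then have "h + t*p + p \<le> n" using mp hp by simp
    then show ?thesis using win[of "h + t*p"] by (simp add: blk_def x_def add.commute)
  qed
  have u1: "us ! 1 = blk 0" using ui[of 1] m1 by simp
  have pu1: "parikh (us ! 1) = (\<lambda>a. j * count_list as a)" using u1 pbi m1 by simp
  have lu1: "length (us ! 1) = p" using u1 hp lw by (simp add: blk_def x_def)
  have pw: "parikh (take p w) = (\<lambda>a. j * count_list as a)" using win[of 0] hp by simp
  have sub0: "parikh_sub (us ! 0) (us ! 1)"
  proof -
    have e: "take h w = take h (take p w)" using hp by (simp add: min_def)
    have "parikh (us ! 0) a \<le> parikh (us ! 1) a" for a
    proof -
      have "parikh (us ! 1) a = parikh (take p w) a" using pu1 pw by simp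
      moreover have "count_list (take h w) a \<le> count_list (take p w) a"
        using count_take_le[of h "take p w" a] e by simp
      ultimately show ?thesis using u0 by (simp add: parikh_def)
    qed
    moreover have "length (us ! 0) < length (us ! 1)" using u0 lu1 hp lw by simp
    ultimately show ?thesis unfolding parikh_sub_def by blast
  qed
  have subk: "parikh_sub (us ! Suc m) (us ! 1)"
  proof -
    have e: "drop (m*p) x = drop (h + m*p - (n-p)) (drop (n-p) w)"
      using rp mp by (simp add: x_def add.commute)
    have tw: "take p (drop (n-p) w) = drop (n-p) w" using lw by simp
    have pw2: "parikh (drop (n-p) w) = (\<lambda>a. j * count_list as a)" using win[of "n-p"] pn tw by simp
    have "parikh (us ! Suc m) a \<le> parikh (us ! 1) a" for a
    proof -
      have "parikh (us ! 1) a = parikh (drop (n-p) w) a" using pu1 pw2 by simp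
      moreover have "count_list (drop (m*p) x) a \<le> count_list (drop (n-p) w) a"
        using count_drop_le[of "h + m*p - (n-p)" "drop (n-p) w" a] e by simp
      ultimately show ?thesis using uk by (simp add: parikh_def)
    qed
    moreover have "length (us ! Suc m) < length (us ! 1)" using uk lu1 lx rp by simp
    ultimately show ?thesis unfolding parikh_sub_def by blast
  qed
  have mid: "\<forall>i\<in>{1..Suc m - 1}. parikh (us ! i) = parikh (us ! 1)"
  proof
    fix i assume "i \<in> {1..Suc m - 1}"
    then have i: "1 \<le> i" "i \<le> m" by auto
    then have "parikh (us ! i) = (\<lambda>a. j * count_list as a)" using ui[OF i] pbi[of "i - 1"] by simp
    then show "parikh (us ! i) = parikh (us ! 1)" using pu1 by simp
  qed
  have w': "concat (replicate (n div length as) as) = w" by (simp add: w_def N_def s_def)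
  have l0: "length (us ! 0) = h" using u0 lw hp by simp
  have k2: "2 \<le> Suc m" using m1 by simp
  show ?thesis
    unfolding abelian_period_def w'
    using p1 lu k2 cu l0 lu1 sub0 mid subk by blast
qed

lemma period_bound:
  assumes "abelian_period w h p" shows "h < p \<and> 1 \<le> p \<and> p \<le> length w"
proof -
  from assms obtain us k where p1: "1 \<le> p" and us: "length us = Suc k" "k \<ge> 2" "concat us = w"
    "length (us ! 0) = h" "length (us ! 1) = p" "parikh_sub (us ! 0) (us ! 1)"
    unfolding abelian_period_def by blast
  have "h < p" using us unfolding parikh_sub_def by simp
  have "us ! 1 \<in> set us" using us by simp
  then have "length (us ! 1) \<le> sum_list (map length us)"
    by (intro member_le_sum_list) auto
  moreover have "length w = sum_list (map length us)" using us(3) by (metis length_concat)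
  ultimately have "p \<le> length w" using us(5) by simp
  then show ?thesis using p1 \<open>h < p\<close> by simp
qed

lemma periods_sub: "abelian_periods w \<subseteq> {0..<length w} \<times> {1..length w}"
  using period_bound unfolding abelian_periods_def by fastforce

lemma periods_fin: "finite (abelian_periods w)"
  by (rule finite_subset[OF periods_sub]) simp

lemma part1: "card (abelian_periods w) \<le> (length w)\<^sup>2"
proof -
  have "card (abelian_periods w) \<le> card ({0..<length w} \<times> {1..length w})"
    by (intro card_mono periods_sub) simp
  then show ?thesis by (simp add: power2_eq_square)
qed

lemma part3:
  assumes ne: "as \<noteq> []" and dn: "length as dvd n"
  shows "real (card (abelian_periods (concat (replicate (n div length as) as))))
              \<ge> (1 / (64 * (real (length as))\<^sup>2)) * (real n)\<^sup>2"
proof -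
  define s where "s = length as"
  define N where "N = n div s"
  define P where "P = abelian_periods (concat (replicate (n div length as) as))"
  have s1: "s \<ge> 1" using ne by (simp add: s_def Suc_le_eq)
  have nN: "n = N * s" using dn by (simp add: N_def s_def)
  have rhs: "(1 / (64 * (real (length as))\<^sup>2)) * (real n)\<^sup>2 = (real N)\<^sup>2 / 64"
    using s1 nN by (simp add: s_def[symmetric] power2_eq_square field_simps)
  have fin: "finite P" by (simp add: P_def periods_fin)
  show ?thesis
  proof (cases "N < 4")
    case True
    show ?thesis
    proof (cases "N = 0")
      case True then have "n = 0" using nN by simp
      then show ?thesis by simp
    next
      case False
      have "abelian_period (concat (replicate (n div length as) as)) 0 s"
        using part2[OF ne, of s n 0] s1 dn False nN by (simp add: s_def)
      then have "(0, s) \<in> P" by (simp add: P_def abelian_periods_def)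
      then have "card P \<ge> 1" using fin by (metis One_nat_def Suc_leI card_gt_0_iff empty_iff)
      moreover have "(real N)\<^sup>2 / 64 \<le> 1"
      proof -
        have "real N \<le> 3" using \<open>N < 4\<close> by simp
        then have "(real N)\<^sup>2 \<le> 3\<^sup>2" by (intro power_mono) auto
        then show ?thesis by simp
      qed
      ultimately show ?thesis using rhs by (simp add: P_def)
    qed
  next
    case False
    define K where "K = N div 4"
    have K1: "K \<ge> 1" using False by (simp add: K_def)
    have K4: "4 * K \<le> N" by (simp add: K_def)
    have K8: "N \<le> 8 * K" using K1 by (simp add: K_def)
    define f where "f = (\<lambda>(h::nat, t::nat). (h, t * s))"
    have sub: "f ` ({0..<K} \<times> {K+1..2*K}) \<subseteq> P"
    proof
      fix x assume "x \<in> f ` ({0..<K} \<times> {K+1..2*K})"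
      then obtain y where y: "y \<in> {0..<K} \<times> {K+1..2*K}" "x = f y" by blast
      obtain h t where yy: "y = (h, t)" by fastforce
      have x: "x = (h, t*s)" using y yy by (simp add: f_def)
      have h: "h < K" and t: "K+1 \<le> t" "t \<le> 2*K" using y yy by auto
      have "1*1 \<le> t * s" using t s1 by (intro mult_le_mono) auto
      then have p1: "1 \<le> t * s" by simp
      have ts: "t * s \<le> 2 * K * s" using t by simp
      have "4 * K * s \<le> N * s" by (rule mult_le_mono1[OF K4])
      moreover have "2 * K * s * 2 = 4 * K * s" by simp
      ultimately have "2 * K * s * 2 \<le> n" using nN by linarith
      with ts have pn: "t * s * 2 \<le> n" by linarith
      have "t \<le> t * s" using mult_le_mono2[OF s1, of t] by simp
      then have "K \<le> t * s" using t by linarith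
      then have h1: "h \<le> t * s - 1" using h by simp
      have "K \<le> n - t * s" using pn \<open>K \<le> t * s\<close> by linarith
      then have h2: "h \<le> n - t*s" using h by simp
      have "abelian_period (concat (replicate (n div length as) as)) h (t*s)"
        using part2[OF ne, of "t*s" n h] p1 pn dn h1 h2 by (simp add: s_def)
      then show "x \<in> P" using x by (simp add: P_def abelian_periods_def)
    qed
    have inj: "inj_on f ({0..<K} \<times> {K+1..2*K})"
      using s1 by (auto simp: inj_on_def f_def)
    have "card (f ` ({0..<K} \<times> {K+1..2*K})) = K * K"
      using card_image[OF inj] by simp
    then have cK: "K * K \<le> card P" using card_mono[OF fin sub] by simp
    have "(real N)\<^sup>2 / 64 \<le> real K * real K"
    proof -
      have "real N \<le> 8 * real K" using K8 by linarith
      then have "(real N)\<^sup>2 \<le> (8 * real K)\<^sup>2" by (intro power_mono) auto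
      then show ?thesis by (simp add: power2_eq_square)
    qed
    also have "\<dots> \<le> real (card P)" using cK by (metis of_nat_le_iff of_nat_mult)
    finally show ?thesis using rhs by (simp add: P_def)
  qed
qed

theorem lemma1:
  fixes as :: "'a list"
  assumes "distinct as" and "length as \<ge> 1"
  shows "(\<forall>w. set w \<subseteq> set as \<longrightarrow> card (abelian_periods w) \<le> (length w)\<^sup>2)
       \<and> (\<forall>n. n \<ge> 1 \<and> length as dvd n \<longrightarrow>
            (\<forall>p h. 1 \<le> p \<and> p \<le> n \<and> length as dvd p \<and> h \<le> min (p - 1) (n - p) \<longrightarrow>
               abelian_period (concat (replicate (n div length as) as)) h p))
       \<and> (\<exists>c::real. c > 0 \<and> (\<forall>n. length as dvd n \<longrightarrow>
            real (card (abelian_periods (concat (replicate (n div length as) as))))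
              \<ge> c * (real n)\<^sup>2))"
  proof -
  have ne: "as \<noteq> []" using assms(2) by auto
  show ?thesis
  proof (intro conjI allI impI)
    fix w :: "'a list" show "card (abelian_periods w) \<le> (length w)\<^sup>2" by (rule part1)
  next
    fix n p h assume "1 \<le> n \<and> length as dvd n"
      "1 \<le> p \<and> p \<le> n \<and> length as dvd p \<and> h \<le> min (p - 1) (n - p)"
    then show "abelian_period (concat (replicate (n div length as) as)) h p"
      using part2[OF ne] by blast
  next
    show "\<exists>c::real. c > 0 \<and> (\<forall>n. length as dvd n \<longrightarrow>
            real (card (abelian_periods (concat (replicate (n div length as) as))))
              \<ge> c * (real n)\<^sup>2)"
      using part3[OF ne] ne by (intro exI[of _ "1 / (64 * (real (length as))\<^sup>2)"]) auto
  qed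
qed

end
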